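(* Let $G$ be a maximal outerplanar graph (with a fixed outerplanar embedding) with reduced graph $\widetilde{G}$ and almost-dual graph $\widehat{G}$. Then the following three sets are in one-to-one correspondence: the sets of central vertices of the copies of $S_3$ in $G$; the triangles (cycles on three vertices) in $\widetilde{G}$; and the vertices of degree $3$ in $\widehat{G}$.
   Context: A graph is maximal outerplanar if it is outerplanar and adding any single new edge yields a non-outerplanar graph. $S_3$ is the graph with vertices $x_1,x_2,x_3,y_1,y_2,y_3$ and edges $\{x_1,x_2\},\{x_1,x_3\},\{x_2,x_3\},\{x_1,y_1\},\{x_2,y_1\},\{x_2,y_2\},\{x_3,y_2\},\{x_3,y_3\},\{x_1,y_3\}$; its central vertices are $x_1,x_2,x_3$ and its central edges are the three edges among them. A copy of $S_3$ in $G$ is an induced subgraph of $G$ isomorphic to $S_3$. The reduced graph $\widetilde{G}$ is obtained by coloring, for every copy of $S_3$ in $G$, its central vertices and central edges, and then deleting from $G$ all uncolored vertices and uncolored edges. The almost-dual graph $\widehat{G}$ (with respect to the fixed embedding) has one vertex for every inner face of $G$, two vertices being adjacent iff the corresponding inner faces share an edge of $G$. *)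

theory Defs
  imports Main
begin

definition simple_graph :: "'a set \<Rightarrow> 'a set set \<Rightarrow> bool" where
  "simple_graph V E \<longleftrightarrow> finite V \<and>
     (\<forall>e\<in>E. \<exists>u v. e = {u, v} \<and> u \<noteq> v \<and> u \<in> V \<and> v \<in> V)"

text \<open>Outerplanar embeddings: the vertices are placed on a circle in the cyclic order
  given by an injective position map pos, edges are drawn as chords, and no two chords cross.\<close>
definition between :: "('a \<Rightarrow> nat) \<Rightarrow> 'a \<Rightarrow> 'a \<Rightarrow> 'a \<Rightarrow> bool" where
  "between pos a b w \<longleftrightarrow> min (pos a) (pos b) < pos w \<and> pos w < max (pos a) (pos b)"

definition crossing :: "('a \<Rightarrow> nat) \<Rightarrow> 'a set \<Rightarrow> 'a set \<Rightarrow> bool" where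
  "crossing pos e1 e2 \<longleftrightarrow> (\<exists>a b c d. e1 = {a, b} \<and> e2 = {c, d} \<and> distinct [a, b, c, d] \<and>
       between pos a b c \<noteq> between pos a b d)"

definition outerplanar_emb :: "'a set \<Rightarrow> 'a set set \<Rightarrow> ('a \<Rightarrow> nat) \<Rightarrow> bool" where
  "outerplanar_emb V E pos \<longleftrightarrow> simple_graph V E \<and> inj_on pos V \<and>
     (\<forall>e1\<in>E. \<forall>e2\<in>E. \<not> crossing pos e1 e2)"

definition outerplanar :: "'a set \<Rightarrow> 'a set set \<Rightarrow> bool" where
  "outerplanar V E \<longleftrightarrow> simple_graph V E \<and> (\<exists>pos. outerplanar_emb V E pos)"

definition maximal_outerplanar :: "'a set \<Rightarrow> 'a set set \<Rightarrow> bool" where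
  "maximal_outerplanar V E \<longleftrightarrow> outerplanar V E \<and>
     (\<forall>u\<in>V. \<forall>v\<in>V. u \<noteq> v \<and> {u, v} \<notin> E \<longrightarrow> \<not> outerplanar V (insert {u, v} E))"

text \<open>Inner faces of the embedding, identified with their vertex sets: F (at least 3 vertices)
  bounds an inner face iff cyclically consecutive vertices of F are adjacent and no edge
  (chord) separates vertices of F.\<close>
definition cyc_consec :: "('a \<Rightarrow> nat) \<Rightarrow> 'a set \<Rightarrow> 'a \<Rightarrow> 'a \<Rightarrow> bool" where
  "cyc_consec pos F u v \<longleftrightarrow> u \<in> F \<and> v \<in> F \<and> u \<noteq> v \<and>
     ((\<forall>w\<in>F. \<not> between pos u v w) \<or> (\<forall>w\<in>F - {u, v}. between pos u v w))"

definition separates :: "('a \<Rightarrow> nat) \<Rightarrow> 'a set \<Rightarrow> 'a set \<Rightarrow> bool" where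
  "separates pos e F \<longleftrightarrow> (\<exists>a b. e = {a, b} \<and> (\<exists>w\<in>F. between pos a b w) \<and>
       (\<exists>w\<in>F. w \<notin> {a, b} \<and> \<not> between pos a b w))"

definition inner_face :: "'a set \<Rightarrow> 'a set set \<Rightarrow> ('a \<Rightarrow> nat) \<Rightarrow> 'a set \<Rightarrow> bool" where
  "inner_face V E pos F \<longleftrightarrow> F \<subseteq> V \<and> card F \<ge> 3 \<and>
     (\<forall>u v. cyc_consec pos F u v \<longrightarrow> {u, v} \<in> E) \<and> (\<forall>e\<in>E. \<not> separates pos e F)"

definition dual_adj :: "'a set set \<Rightarrow> 'a set \<Rightarrow> 'a set \<Rightarrow> bool" where
  "dual_adj E F1 F2 \<longleftrightarrow> F1 \<noteq> F2 \<and> (\<exists>e\<in>E. e \<subseteq> F1 \<inter> F2)"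

definition dual_degree :: "'a set \<Rightarrow> 'a set set \<Rightarrow> ('a \<Rightarrow> nat) \<Rightarrow> 'a set \<Rightarrow> nat" where
  "dual_degree V E pos F = card {F'. inner_face V E pos F' \<and> dual_adj E F F'}"

definition dual_deg3 :: "'a set \<Rightarrow> 'a set set \<Rightarrow> ('a \<Rightarrow> nat) \<Rightarrow> 'a set set" where
  "dual_deg3 V E pos = {F. inner_face V E pos F \<and> dual_degree V E pos F = 3}"

text \<open>Induced copies of S_3 (x's central, y's outer).\<close>
definition S3_copy :: "'a set \<Rightarrow> 'a set set \<Rightarrow> 'a \<Rightarrow> 'a \<Rightarrow> 'a \<Rightarrow> 'a \<Rightarrow> 'a \<Rightarrow> 'a \<Rightarrow> bool" where
  "S3_copy V E x1 x2 x3 y1 y2 y3 \<longleftrightarrow>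
     {x1, x2, x3, y1, y2, y3} \<subseteq> V \<and> distinct [x1, x2, x3, y1, y2, y3] \<and>
     {e\<in>E. e \<subseteq> {x1, x2, x3, y1, y2, y3}} =
       {{x1, x2}, {x1, x3}, {x2, x3}, {x1, y1}, {x2, y1}, {x2, y2}, {x3, y2}, {x3, y3}, {x1, y3}}"

definition central_sets :: "'a set \<Rightarrow> 'a set set \<Rightarrow> 'a set set" where
  "central_sets V E = {{x1, x2, x3} | x1 x2 x3 y1 y2 y3. S3_copy V E x1 x2 x3 y1 y2 y3}"

definition reduced_V :: "'a set \<Rightarrow> 'a set set \<Rightarrow> 'a set" where
  "reduced_V V E = \<Union> (central_sets V E)"

definition reduced_E :: "'a set \<Rightarrow> 'a set set \<Rightarrow> 'a set set" where
  "reduced_E V E = {e. \<exists>X\<in>central_sets V E. e \<subseteq> X \<and> card e = 2}"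

definition reduced_triangles :: "'a set \<Rightarrow> 'a set set \<Rightarrow> 'a set set" where
  "reduced_triangles V E = {T. T \<subseteq> reduced_V V E \<and> card T = 3 \<and>
     (\<forall>u\<in>T. \<forall>v\<in>T. u \<noteq> v \<longrightarrow> {u, v} \<in> reduced_E V E)}"

end

theory Submission
  imports Defs
begin

definition btw :: "nat \<Rightarrow> nat \<Rightarrow> nat \<Rightarrow> bool" where
 "btw a b w \<longleftrightarrow> min a b < w \<and> w < max a b"

lemma btw_alt: "btw a b w \<longleftrightarrow> (a < w \<and> w < b) \<or> (b < w \<and> w < a)"
  unfolding btw_def by auto

lemma L1a: "distinct [A,B,C,X::nat] \<Longrightarrow> btw A C B = btw A C X \<Longrightarrow> btw B C A = btw B C X
  \<Longrightarrow> btw A B C = btw A B X \<Longrightarrow> False"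
  apply (simp only: distinct.simps list.set insert_iff empty_iff de_Morgan_disj simp_thms)
  unfolding btw_alt
  apply (cases "A < B"; cases "A < C"; cases "A < X"; cases "B < C"; cases "B < X"; cases "C < X")
  apply (simp_all add: not_less)
  done

lemma K4a: "distinct [A,B,C,D::nat] \<Longrightarrow> btw A C B = btw A C D \<Longrightarrow> btw A B C = btw A B D
  \<Longrightarrow> btw A D B = btw A D C \<Longrightarrow> False"
  apply (simp only: distinct.simps list.set insert_iff empty_iff de_Morgan_disj simp_thms)
  unfolding btw_alt
  apply (cases "A < B"; cases "A < C"; cases "A < D"; cases "B < C"; cases "B < D"; cases "C < D")
  apply (simp_all add: not_less)
  done

lemma swapa: "distinct [A,B,C,D::nat] \<Longrightarrow> btw A B C \<noteq> btw A B D \<Longrightarrow> btw C D A \<noteq> btw C D B"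
  apply (simp only: distinct.simps list.set insert_iff empty_iff de_Morgan_disj simp_thms)
  unfolding btw_alt
  apply (cases "A < B"; cases "A < C"; cases "A < D"; cases "B < C"; cases "B < D"; cases "C < D")
  apply (simp_all add: not_less)
  done

lemma btw_self: "\<not> btw A B A" "\<not> btw A B B"
  unfolding btw_def by auto

lemma between_btw: "between pos a b w = btw (pos a) (pos b) (pos w)"
  by (simp add: between_def btw_def)

definition tri :: "'a set set \<Rightarrow> 'a set \<Rightarrow> bool" where
  "tri E T \<longleftrightarrow> card T = 3 \<and> (\<forall>u\<in>T. \<forall>v\<in>T. u \<noteq> v \<longrightarrow> {u, v} \<in> E)"

definition good :: "'a set set \<Rightarrow> 'a set \<Rightarrow> bool" where
  "good E T \<longleftrightarrow> tri E T \<and> (\<forall>u\<in>T. \<forall>v\<in>T. u \<noteq> v \<longrightarrow> (\<exists>z. z \<notin> T \<and> {u, z} \<in> E \<and> {v, z} \<in> E))"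

definition oth :: "'a set set \<Rightarrow> 'a \<Rightarrow> 'a \<Rightarrow> 'a \<Rightarrow> bool" where
  "oth E a b c \<longleftrightarrow> (\<exists>z. z \<notin> {a, b, c} \<and> {a, z} \<in> E \<and> {b, z} \<in> E)"

definition Tset :: "'a set set \<Rightarrow> 'a \<Rightarrow> 'a \<Rightarrow> 'a \<Rightarrow> 'a set set" where
  "Tset E a b c = {{a, b, z} | z. z \<notin> {a, b, c} \<and> {a, z} \<in> E \<and> {b, z} \<in> E}"

lemma good_iff:
  assumes "T = {a, b, c}" "distinct [a, b, c]" "{a, b} \<in> E" "{b, c} \<in> E" "{a, c} \<in> E"
  shows "good E T \<longleftrightarrow> oth E a b c \<and> oth E b c a \<and> oth E a c b"
proof -
  have t: "tri E T" unfolding tri_def using assms by (auto simp: insert_commute)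
  show ?thesis
  proof
    assume g: "good E T"
    have "oth E u v w" if "u \<in> T" "v \<in> T" "u \<noteq> v" "T = {u, v, w}" for u v w
      using g that unfolding good_def oth_def by blast
    then show "oth E a b c \<and> oth E b c a \<and> oth E a c b"
      using assms(1,2) by (simp add: insert_commute)
  next
    assume o: "oth E a b c \<and> oth E b c a \<and> oth E a c b"
    have "\<exists>z. z \<notin> T \<and> {u, z} \<in> E \<and> {v, z} \<in> E" if "u \<in> T" "v \<in> T" "u \<noteq> v" for u v
    proof -
      have "(u = a \<and> v = b) \<or> (u = b \<and> v = a) \<or> (u = b \<and> v = c) \<or> (u = c \<and> v = b) \<or>
            (u = a \<and> v = c) \<or> (u = c \<and> v = a)" using that assms(1) by auto
      then show ?thesis using o assms(1) unfolding oth_def by (auto simp: insert_commute)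
    qed
    then show "good E T" unfolding good_def using t by blast
  qed
qed

lemma third:
  assumes "card T = 3" "p \<in> T" "q \<in> T" "p \<noteq> q"
  shows "\<exists>r. T = {p, q, r} \<and> r \<notin> {p, q}"
proof -
  have fin: "finite T" using assms(1) by (metis card.infinite zero_neq_numeral)
  have "card (T - {p, q}) = 1" using assms fin by (simp add: card_Diff_subset)
  then obtain r where r: "T - {p, q} = {r}" by (meson card_1_singletonE)
  then have "T = {p, q, r}" using assms(2,3) by auto
  moreover have "r \<notin> {p, q}" using r by auto
  ultimately show ?thesis by blast
qed

context
  fixes V :: "'a set" and E :: "'a set set" and pos :: "'a \<Rightarrow> nat"
  assumes oe: "outerplanar_emb V E pos"
begin

lemma edge_V: "{u, v} \<in> E \<Longrightarrow> u \<in> V \<and> v \<in> V"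
  using oe unfolding outerplanar_emb_def simple_graph_def
  by (metis doubleton_eq_iff)

lemma edge_ne: "{u, v} \<in> E \<Longrightarrow> u \<noteq> v"
  using oe unfolding outerplanar_emb_def simple_graph_def
  by (metis doubleton_eq_iff)

lemma posinj: "u \<in> V \<Longrightarrow> v \<in> V \<Longrightarrow> u \<noteq> v \<Longrightarrow> pos u \<noteq> pos v"
  using oe unfolding outerplanar_emb_def by (meson inj_on_def)

lemma nc: "{a, b} \<in> E \<Longrightarrow> {c, d} \<in> E \<Longrightarrow> distinct [a, b, c, d] \<Longrightarrow>
   btw (pos a) (pos b) (pos c) = btw (pos a) (pos b) (pos d)"
proof -
  assume h: "{a, b} \<in> E" "{c, d} \<in> E" "distinct [a, b, c, d]"
  then have "\<not> crossing pos {a, b} {c, d}" using oe unfolding outerplanar_emb_def by blast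
  then show ?thesis using h unfolding crossing_def between_btw by blast
qed

lemma L1:
  assumes "{a, c} \<in> E" "{b, c} \<in> E" "{a, x} \<in> E" "{b, x} \<in> E" "distinct [a, b, c, x]"
    and "btw (pos a) (pos b) (pos c) = btw (pos a) (pos b) (pos x)"
  shows False
proof -
  have v: "a \<in> V" "b \<in> V" "c \<in> V" "x \<in> V" using assms edge_V by auto
  have d: "distinct [pos a, pos b, pos c, pos x]" using assms(5) v posinj by auto
  have 1: "btw (pos a) (pos c) (pos b) = btw (pos a) (pos c) (pos x)"
    using nc[OF assms(1) assms(4)] assms(5) by auto
  have 2: "btw (pos b) (pos c) (pos a) = btw (pos b) (pos c) (pos x)"
    using nc[OF assms(2) assms(3)] assms(5) by auto
  show False using L1a[OF d 1 2 assms(6)] .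
qed

lemma K4:
  assumes "{a, b} \<in> E" "{a, c} \<in> E" "{a, d} \<in> E" "{b, c} \<in> E" "{b, d} \<in> E" "{c, d} \<in> E"
    and "distinct [a, b, c, d]"
  shows False
proof -
  have v: "a \<in> V" "b \<in> V" "c \<in> V" "d \<in> V" using assms edge_V by auto
  have dd: "distinct [pos a, pos b, pos c, pos d]" using assms(7) v posinj by auto
  show False
    using K4a[OF dd nc[OF assms(2) assms(5)] nc[OF assms(1) assms(6)] nc[OF assms(3) assms(4)]]
      assms(7) by auto
qed

lemma L3:
  assumes "{a, b} \<in> E" "{b, c} \<in> E" "{a, c} \<in> E" "{a, z} \<in> E" "{b, z} \<in> E"
    "{c, x} \<in> E" "{z, x} \<in> E" "distinct [a, b, c, z, x]"
  shows False
proof -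
  have 1: "btw (pos a) (pos b) (pos c) \<noteq> btw (pos a) (pos b) (pos z)"
    using L1[of a c b z] assms by (auto simp: insert_commute)
  have 2: "btw (pos a) (pos b) (pos z) = btw (pos a) (pos b) (pos x)"
    using nc[OF assms(1) assms(7)] assms(8) by auto
  have 3: "btw (pos a) (pos b) (pos c) = btw (pos a) (pos b) (pos x)"
    using nc[OF assms(1) assms(6)] assms(8) by auto
  show False using 1 2 3 by simp
qed


lemma tri_elim:
  assumes "tri E T"
  obtains a b c where "T = {a, b, c}" "distinct [a, b, c]" "{a, b} \<in> E" "{b, c} \<in> E" "{a, c} \<in> E"
proof -
  from assms obtain a b c where T: "T = {a, b, c}" "a \<noteq> b" "b \<noteq> c" "a \<noteq> c"
    unfolding tri_def card_3_iff by blast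
  then have "{a, b} \<in> E" "{b, c} \<in> E" "{a, c} \<in> E" using assms unfolding tri_def by auto
  then show ?thesis using that T by auto
qed

lemma tri_intro:
  assumes "distinct [a, b, c]" "{a, b} \<in> E" "{b, c} \<in> E" "{a, c} \<in> E"
  shows "tri E {a, b, c}"
  using assms unfolding tri_def by (auto simp: insert_commute)

lemma tri_face:
  assumes "tri E T"
  shows "inner_face V E pos T"
proof -
  obtain a b c where T: "T = {a, b, c}" "distinct [a, b, c]" "{a, b} \<in> E" "{b, c} \<in> E" "{a, c} \<in> E"
    using assms by (rule tri_elim)
  have sub: "T \<subseteq> V" using T edge_V by auto
  have card: "card T \<ge> 3" using assms unfolding tri_def by simp
  have cc: "\<forall>u v. cyc_consec pos T u v \<longrightarrow> {u, v} \<in> E"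
    using assms unfolding tri_def cyc_consec_def by blast
  have ns: "\<not> separates pos e T" if "e \<in> E" for e
  proof
    assume "separates pos e T"
    then obtain p q w1 w2 where e: "e = {p, q}" and w1: "w1 \<in> T" "between pos p q w1"
      and w2: "w2 \<in> T" "w2 \<notin> {p, q}" "\<not> between pos p q w2"
      unfolding separates_def by blast
    have pq: "p \<noteq> q" using edge_ne that e by auto
    have w1pq: "w1 \<noteq> p" "w1 \<noteq> q" using w1(2) btw_self unfolding between_btw by auto
    have w12: "w1 \<noteq> w2" using w1 w2 by auto
    have "{w1, w2} \<in> E" using assms w1 w2 w12 unfolding tri_def by blast
    then have "btw (pos p) (pos q) (pos w1) = btw (pos p) (pos q) (pos w2)"
      using nc[of p q w1 w2] that e pq w1pq w12 w2 by auto
    then show False using w1 w2 unfolding between_btw by simp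
  qed
  show ?thesis unfolding inner_face_def using sub card cc ns by blast
qed

lemma face_nocross:
  assumes "inner_face V E pos F" "{a, b} \<in> E" "c \<in> F" "d \<in> F" "distinct [a, b, c, d]"
    "btw (pos a) (pos b) (pos c) \<noteq> btw (pos a) (pos b) (pos d)"
  shows False
proof -
  have "separates pos {a, b} F"
  proof (cases "btw (pos a) (pos b) (pos c)")
    case True
    have "{a, b} = {a, b} \<and> (\<exists>w\<in>F. between pos a b w) \<and> (\<exists>w\<in>F. w \<notin> {a, b} \<and> \<not> between pos a b w)"
      unfolding between_btw using assms True by auto
    then show ?thesis unfolding separates_def by blast
  next
    case False
    have "{a, b} = {a, b} \<and> (\<exists>w\<in>F. between pos a b w) \<and> (\<exists>w\<in>F. w \<notin> {a, b} \<and> \<not> between pos a b w)"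
      unfolding between_btw using assms False by auto
    then show ?thesis unfolding separates_def by blast
  qed
  then show False using assms(1,2) unfolding inner_face_def by blast
qed

lemma notsub: "finite F \<Longrightarrow> finite S \<Longrightarrow> card S < card F \<Longrightarrow> \<exists>x\<in>F. x \<notin> S"
  by (meson card_mono not_less subsetI)

lemma three_cc:
  assumes "F = {a, b, c}" "distinct [a, b, c]" "u \<in> F" "v \<in> F" "u \<noteq> v"
  shows "cyc_consec pos F u v"
  using assms unfolding cyc_consec_def between_def by auto

lemma face_tri:
  assumes mo: "maximal_outerplanar V E" and f: "inner_face V E pos F"
  shows "tri E F"
proof -
  have fin: "finite F" using f unfolding inner_face_def by (metis card.infinite not_numeral_le_zero)
  have c3: "card F \<ge> 3" using f unfolding inner_face_def by simp
  have FV: "F \<subseteq> V" using f unfolding inner_face_def by simp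
  have key: False if kp: "u \<in> F" "v \<in> F" "w1 \<in> F" "w2 \<in> F" "distinct [u, v, w1, w2]"
     "btw (pos u) (pos v) (pos w1)" "\<not> btw (pos u) (pos v) (pos w2)" for u v w1 w2
  proof -
    have uvV: "u \<in> V" "v \<in> V" using FV that by auto
    have notE: "{u, v} \<notin> E"
    proof
      assume "{u, v} \<in> E"
      then show False using face_nocross[OF f, of u v w1 w2] that by auto
    qed
    have sg: "simple_graph V (insert {u, v} E)"
      using oe uvV that(5) unfolding outerplanar_emb_def simple_graph_def by auto
    have ncr: "\<not> crossing pos e1 e2" if e1: "e1 \<in> insert {u, v} E" and e2: "e2 \<in> insert {u, v} E" for e1 e2
    proof
      assume "crossing pos e1 e2"
      then obtain a b c d where abcd: "e1 = {a, b}" "e2 = {c, d}" "distinct [a, b, c, d]"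
        "btw (pos a) (pos b) (pos c) \<noteq> btw (pos a) (pos b) (pos d)"
        unfolding crossing_def between_btw by blast
      have esub: "\<And>e. e \<in> insert {u, v} E \<Longrightarrow> e \<subseteq> V"
        using oe uvV unfolding outerplanar_emb_def simple_graph_def by auto
      have vab: "a \<in> V" "b \<in> V" "c \<in> V" "d \<in> V" using abcd(1,2) esub[OF e1] esub[OF e2] by auto
      have dpos: "distinct [pos a, pos b, pos c, pos d]" using abcd(3) vab posinj by auto
      show False
      proof (cases "e1 \<in> E")
        case e1E: True
        show False
        proof (cases "e2 \<in> E")
          case True
          then show False using e1E oe \<open>crossing pos e1 e2\<close> unfolding outerplanar_emb_def by blast
        next
          case False
          then have "e2 = {u, v}" using e2 by auto
          then have "c \<in> F" "d \<in> F" using abcd(2) kp(1,2) by (auto simp: doubleton_eq_iff)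
          then show False using face_nocross[OF f, of a b c d] abcd e1E by auto
        qed
      next
        case False
        then have e1uv: "e1 = {u, v}" using e1 by auto
        then have abF: "a \<in> F" "b \<in> F" using abcd(1) kp(1,2) by (auto simp: doubleton_eq_iff)
        show False
        proof (cases "e2 \<in> E")
          case True
          have "btw (pos c) (pos d) (pos a) \<noteq> btw (pos c) (pos d) (pos b)"
            using swapa[OF dpos abcd(4)] .
          then show False using face_nocross[OF f, of c d a b] abcd True abF by auto
        next
          case False
          then have "e2 = {u, v}" using e2 by auto
          then show False using e1uv abcd by (auto simp: doubleton_eq_iff)
        qed
      qed
    qed
    have "outerplanar V (insert {u, v} E)"
      unfolding outerplanar_def outerplanar_emb_def using sg ncr oe
      unfolding outerplanar_emb_def by blast
    then show False using mo notE uvV that(5) unfolding maximal_outerplanar_def by auto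
  qed
  have "card F = 3"
  proof (rule ccontr)
    assume "card F \<noteq> 3"
    then have c4: "card F > 3" using c3 by simp
    obtain a where a: "a \<in> F" using notsub[OF fin, of "{}"] c4 by auto
    obtain b where b: "b \<in> F" "b \<notin> {a}" using notsub[OF fin, of "{a}"] c4 by auto
    obtain c where c: "c \<in> F" "c \<notin> {a, b}"
    proof -
      have "card {a, b} \<le> 2" by (simp add: card_insert_if)
      then show ?thesis using notsub[OF fin, of "{a, b}"] c4 that by fastforce
    qed
    have "card {a, b, c} \<le> 3" by (simp add: card_insert_if)
    then obtain d where d: "d \<in> F" "d \<notin> {a, b, c}"
      using notsub[OF fin, of "{a, b, c}"] c4 by fastforce
    have dis: "distinct [a, b, c, d]" using b c d by auto
    have V4: "a \<in> V" "b \<in> V" "c \<in> V" "d \<in> V" using a b c d FV by auto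
    have dpos: "distinct [pos a, pos b, pos c, pos d]" using dis V4 posinj by auto
    have k: "btw (pos a) (pos c) (pos b) \<noteq> btw (pos a) (pos c) (pos d) \<or>
       btw (pos a) (pos b) (pos c) \<noteq> btw (pos a) (pos b) (pos d) \<or>
       btw (pos a) (pos d) (pos b) \<noteq> btw (pos a) (pos d) (pos c)"
      using K4a[OF dpos] by blast
    show False
    proof -
      have g: False if "x1 \<in> F" "x2 \<in> F" "x3 \<in> F" "x4 \<in> F" "distinct [x1, x2, x3, x4]"
        "btw (pos x1) (pos x2) (pos x3) \<noteq> btw (pos x1) (pos x2) (pos x4)" for x1 x2 x3 x4
      proof (cases "btw (pos x1) (pos x2) (pos x3)")
        case True
        then show False using key[of x1 x2 x3 x4] that by auto
      next
        case False
        then show False using key[of x1 x2 x4 x3] that by auto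
      qed
      show False using k
      proof (elim disjE)
        assume "btw (pos a) (pos c) (pos b) \<noteq> btw (pos a) (pos c) (pos d)"
        then show False using g[of a c b d] a b c d dis by auto
      next
        assume "btw (pos a) (pos b) (pos c) \<noteq> btw (pos a) (pos b) (pos d)"
        then show False using g[of a b c d] a b c d dis by auto
      next
        assume "btw (pos a) (pos d) (pos b) \<noteq> btw (pos a) (pos d) (pos c)"
        then show False using g[of a d b c] a b c d dis by auto
      qed
    qed
  qed
  then obtain a b c where F: "F = {a, b, c}" "distinct [a, b, c]"
    unfolding card_3_iff by auto
  have "\<forall>u\<in>F. \<forall>v\<in>F. u \<noteq> v \<longrightarrow> {u, v} \<in> E"
    using three_cc[OF F] f unfolding inner_face_def by blast
  then show ?thesis unfolding tri_def using \<open>card F = 3\<close> by blast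
qed


lemma edge_pair: "e \<in> E \<Longrightarrow> \<exists>p q. e = {p, q} \<and> p \<noteq> q"
  using oe unfolding outerplanar_emb_def simple_graph_def by blast

lemma Tset_le1:
  assumes "distinct [a, b, c]" "{a, c} \<in> E" "{b, c} \<in> E"
  shows "Tset E a b c = {} \<or> (\<exists>z. z \<notin> {a, b, c} \<and> {a, z} \<in> E \<and> {b, z} \<in> E \<and> Tset E a b c = {{a, b, z}})"
proof -
  have side: "btw (pos a) (pos b) (pos z) \<noteq> btw (pos a) (pos b) (pos c)"
    if "z \<notin> {a, b, c}" "{a, z} \<in> E" "{b, z} \<in> E" for z
    using L1[of a c b z] assms that by auto
  have uniq: "z = w" if "z \<notin> {a, b, c}" "{a, z} \<in> E" "{b, z} \<in> E"
     "w \<notin> {a, b, c}" "{a, w} \<in> E" "{b, w} \<in> E" for z w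
  proof (rule ccontr)
    assume "z \<noteq> w"
    moreover have "btw (pos a) (pos b) (pos z) = btw (pos a) (pos b) (pos w)"
      using side[of z] side[of w] that by auto
    ultimately show False using L1[of a z b w] that assms by auto
  qed
  show ?thesis
  proof (cases "Tset E a b c = {}")
    case False
    then obtain z where z: "z \<notin> {a, b, c}" "{a, z} \<in> E" "{b, z} \<in> E"
      unfolding Tset_def by auto
    have "Tset E a b c = {{a, b, z}}"
    proof (intro equalityI subsetI)
      fix T assume "T \<in> Tset E a b c"
      then obtain w where w: "T = {a, b, w}" "w \<notin> {a, b, c}" "{a, w} \<in> E" "{b, w} \<in> E"
        unfolding Tset_def by blast
      then have "w = z" using uniq[OF w(2-4) z] by simp
      then show "T \<in> {{a, b, z}}" using w by simp
    next
      fix T assume "T \<in> {{a, b, z}}"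
      then show "T \<in> Tset E a b c" unfolding Tset_def using z by blast
    qed
    then show ?thesis using z by blast
  qed simp
qed

lemma Tset_nbr:
  assumes "{p, q} \<in> E" "p \<noteq> q" "F = {p, q, s}" "F' \<in> Tset E p q s"
  shows "inner_face V E pos F' \<and> dual_adj E F F'"
proof -
  obtain z where z: "F' = {p, q, z}" "z \<notin> {p, q, s}" "{p, z} \<in> E" "{q, z} \<in> E"
    using assms(4) unfolding Tset_def by auto
  have "tri E F'" using tri_intro[of p q z] z assms(1,2) by auto
  then have "inner_face V E pos F'" by (rule tri_face)
  moreover have "dual_adj E F F'" unfolding dual_adj_def using z assms by auto
  ultimately show ?thesis by blast
qed

lemma nbrs:
  assumes mo: "maximal_outerplanar V E"
    and F: "F = {a, b, c}" "distinct [a, b, c]" "{a, b} \<in> E" "{b, c} \<in> E" "{a, c} \<in> E"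
  shows "{F'. inner_face V E pos F' \<and> dual_adj E F F'} = Tset E a b c \<union> Tset E b c a \<union> Tset E a c b"
proof
  show "Tset E a b c \<union> Tset E b c a \<union> Tset E a c b \<subseteq> {F'. inner_face V E pos F' \<and> dual_adj E F F'}"
  proof -
    have "F = {b, c, a}" "F = {a, c, b}" using F(1) by (auto simp: insert_commute)
    then show ?thesis using Tset_nbr[of a b F c] Tset_nbr[of b c F a] Tset_nbr[of a c F b] F by auto
  qed
next
  show "{F'. inner_face V E pos F' \<and> dual_adj E F F'} \<subseteq> Tset E a b c \<union> Tset E b c a \<union> Tset E a c b"
  proof
    fix F' assume "F' \<in> {F'. inner_face V E pos F' \<and> dual_adj E F F'}"
    then have f': "inner_face V E pos F'" "dual_adj E F F'" by auto
    have t': "tri E F'" using face_tri[OF mo f'(1)] .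
    obtain e where e: "e \<in> E" "e \<subseteq> F \<inter> F'" and ne: "F \<noteq> F'" using f'(2) unfolding dual_adj_def by blast
    obtain p q where pq: "e = {p, q}" "p \<noteq> q" using edge_pair[OF e(1)] by blast
    have pqF: "p \<in> F" "q \<in> F" "p \<in> F'" "q \<in> F'" using e pq by auto
    obtain r where r: "F' = {p, q, r}" "r \<notin> {p, q}" using third[of F' p q] t' pqF pq unfolding tri_def by auto
    have c3: "card F = 3" using F by simp
    obtain s where s: "F = {p, q, s}" "s \<notin> {p, q}" using third[OF c3 pqF(1,2) pq(2)] by blast
    have "r \<noteq> s" using r s ne by auto
    then have rF: "r \<notin> {p, q, s}" using r by auto
    have rE: "{p, r} \<in> E" "{q, r} \<in> E" using t' r unfolding tri_def by auto
    have inT: "F' \<in> Tset E p q s" unfolding Tset_def using r(1) rF rE by blast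
    have "(p = a \<and> q = b \<and> s = c) \<or> (p = b \<and> q = a \<and> s = c) \<or> (p = b \<and> q = c \<and> s = a) \<or>
          (p = c \<and> q = b \<and> s = a) \<or> (p = a \<and> q = c \<and> s = b) \<or> (p = c \<and> q = a \<and> s = b)"
    proof -
      have m: "p \<in> {a, b, c}" "q \<in> {a, b, c}" "s \<in> {a, b, c}" "s \<noteq> p" "s \<noteq> q"
        using F(1) s pqF(1,2) by auto
      show ?thesis using m pq(2) F(2) by auto
    qed
    then show "F' \<in> Tset E a b c \<union> Tset E b c a \<union> Tset E a c b"
      using inT unfolding Tset_def by (auto simp: insert_commute)
  qed
qed


lemma oth_iff: "oth E p q s \<longleftrightarrow> Tset E p q s \<noteq> {}"
  unfolding oth_def Tset_def by auto

lemma card_le1: "Tset E p q s = {} \<or> (\<exists>z. Tset E p q s = {{p, q, z}}) \<Longrightarrow> card (Tset E p q s) \<le> 1"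
  by auto

lemma deg3_good:
  assumes mo: "maximal_outerplanar V E"
  shows "F \<in> dual_deg3 V E pos \<longleftrightarrow> good E F"
proof
  assume "F \<in> dual_deg3 V E pos"
  then have f: "inner_face V E pos F" and d: "dual_degree V E pos F = 3"
    unfolding dual_deg3_def by auto
  have t: "tri E F" using face_tri[OF mo f] .
  obtain a b c where F: "F = {a, b, c}" "distinct [a, b, c]" "{a, b} \<in> E" "{b, c} \<in> E" "{a, c} \<in> E"
    using t by (rule tri_elim)
  have N: "card (Tset E a b c \<union> Tset E b c a \<union> Tset E a c b) = 3"
    using d nbrs[OF mo F] unfolding dual_degree_def by simp
  have u1: "card (Tset E a b c) \<le> 1" using Tset_le1[of a b c] F by (intro card_le1) (auto simp: insert_commute)
  have u2: "card (Tset E b c a) \<le> 1" using Tset_le1[of b c a] F by (intro card_le1) (auto simp: insert_commute)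
  have u3: "card (Tset E a c b) \<le> 1" using Tset_le1[of a c b] F by (intro card_le1) (auto simp: insert_commute)
  have le: "card (Tset E a b c \<union> Tset E b c a \<union> Tset E a c b) \<le>
      card (Tset E a b c) + card (Tset E b c a) + card (Tset E a c b)"
    by (meson add_right_mono card_Un_le le_trans)
  have "Tset E a b c \<noteq> {}" "Tset E b c a \<noteq> {}" "Tset E a c b \<noteq> {}"
    using N le u1 u2 u3 by (auto simp del: Un_empty)
  then show "good E F" using good_iff[OF F] oth_iff by blast
next
  assume g: "good E F"
  then have t: "tri E F" unfolding good_def by simp
  obtain a b c where F: "F = {a, b, c}" "distinct [a, b, c]" "{a, b} \<in> E" "{b, c} \<in> E" "{a, c} \<in> E"
    using t by (rule tri_elim)
  have o: "Tset E a b c \<noteq> {}" "Tset E b c a \<noteq> {}" "Tset E a c b \<noteq> {}"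
    using g good_iff[OF F] oth_iff by auto
  obtain z where z: "z \<notin> {a, b, c}" "Tset E a b c = {{a, b, z}}"
    using Tset_le1[of a b c] F o(1) by (auto simp: insert_commute)
  obtain x where x: "x \<notin> {b, c, a}" "Tset E b c a = {{b, c, x}}"
    using Tset_le1[of b c a] F o(2) by (auto simp: insert_commute)
  obtain y where y: "y \<notin> {a, c, b}" "Tset E a c b = {{a, c, y}}"
    using Tset_le1[of a c b] F o(3) by (auto simp: insert_commute)
  have ne: "{a, b, z} \<noteq> {b, c, x}" "{a, b, z} \<noteq> {a, c, y}" "{b, c, x} \<noteq> {a, c, y}"
  proof -
    have g: "\<And>A B w. w \<notin> A \<Longrightarrow> w \<in> B \<Longrightarrow> A \<noteq> B" by blast
    have c1: "c \<notin> {a, b, z}" using z F(2) by auto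
    have c2: "a \<notin> {b, c, x}" using x F(2) by auto
    show "{a, b, z} \<noteq> {b, c, x}" using g[OF c1] by simp
    show "{a, b, z} \<noteq> {a, c, y}" using g[OF c1] by simp
    show "{b, c, x} \<noteq> {a, c, y}" using g[OF c2] by simp
  qed
  have "dual_degree V E pos F = card {{a, b, z}, {b, c, x}, {a, c, y}}"
    unfolding dual_degree_def nbrs[OF mo F] z x y by (simp add: insert_commute)
  also have "\<dots> = 3" using ne by simp
  finally show "F \<in> dual_deg3 V E pos"
    unfolding dual_deg3_def using tri_face[OF t] by simp
qed


lemma central_good:
  assumes "T \<in> central_sets V E"
  shows "good E T"
proof -
  obtain x1 x2 x3 y1 y2 y3 where T: "T = {x1, x2, x3}" and S: "S3_copy V E x1 x2 x3 y1 y2 y3"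
    using assms unfolding central_sets_def by blast
  have d: "distinct [x1, x2, x3, y1, y2, y3]" using S unfolding S3_copy_def by simp
  have "{{x1, x2}, {x1, x3}, {x2, x3}, {x1, y1}, {x2, y1}, {x2, y2}, {x3, y2}, {x3, y3}, {x1, y3}} \<subseteq> E"
  proof -
    have eq: "{e \<in> E. e \<subseteq> {x1, x2, x3, y1, y2, y3}} =
       {{x1, x2}, {x1, x3}, {x2, x3}, {x1, y1}, {x2, y1}, {x2, y2}, {x3, y2}, {x3, y3}, {x1, y3}}"
      using S unfolding S3_copy_def by (elim conjE)
    have "{e \<in> E. e \<subseteq> {x1, x2, x3, y1, y2, y3}} \<subseteq> E" by blast
    then show ?thesis unfolding eq .
  qed
  then have e: "{x1, x2} \<in> E" "{x1, x3} \<in> E" "{x2, x3} \<in> E" "{x1, y1} \<in> E" "{x2, y1} \<in> E"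
     "{x2, y2} \<in> E" "{x3, y2} \<in> E" "{x3, y3} \<in> E" "{x1, y3} \<in> E" by auto
  have "oth E x1 x2 x3" unfolding oth_def using d e by (intro exI[of _ y1]) auto
  moreover have "oth E x2 x3 x1" unfolding oth_def using d e by (intro exI[of _ y2]) auto
  moreover have "oth E x1 x3 x2" unfolding oth_def using d e by (intro exI[of _ y3]) auto
  moreover have "distinct [x1, x2, x3]" using d by simp
  ultimately show ?thesis using good_iff[OF T _ e(1) e(3) e(2)] by blast
qed

lemma good_central:
  assumes g: "good E T"
  shows "T \<in> central_sets V E"
proof -
  have t: "tri E T" using g unfolding good_def by simp
  obtain a b c where F: "T = {a, b, c}" "distinct [a, b, c]" and ab: "{a, b} \<in> E" and bc: "{b, c} \<in> E"
    and ac: "{a, c} \<in> E"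
    using t by (rule tri_elim)
  have o: "oth E a b c" "oth E b c a" "oth E a c b" using g good_iff[OF F ab bc ac] by auto
  obtain z where z: "z \<notin> {a, b, c}" "{a, z} \<in> E" "{b, z} \<in> E" using o(1) unfolding oth_def by blast
  obtain x where x: "x \<notin> {a, b, c}" "{b, x} \<in> E" "{c, x} \<in> E" using o(2) unfolding oth_def by auto
  obtain y where y: "y \<notin> {a, b, c}" "{a, y} \<in> E" "{c, y} \<in> E" using o(3) unfolding oth_def by auto
  have cz: "{c, z} \<notin> E"
  proof
    assume "{c, z} \<in> E" then show False using K4[of a b c z] F ab bc ac z by (auto simp: insert_commute)
  qed
  have ax: "{a, x} \<notin> E"
  proof
    assume "{a, x} \<in> E" then show False using K4[of a b c x] F ab bc ac x by (auto simp: insert_commute)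
  qed
  have by': "{b, y} \<notin> E"
  proof
    assume "{b, y} \<in> E" then show False using K4[of a b c y] F ab bc ac y by (auto simp: insert_commute)
  qed
  have zx: "z \<noteq> x" using cz x by auto
  have zy: "z \<noteq> y" using cz y by (auto simp: insert_commute)
  have xy: "x \<noteq> y" using ax y by auto
  have zxE: "{z, x} \<notin> E"
  proof
    assume "{z, x} \<in> E"
    then show False using L3[of a b c z x] F ab bc ac z x zx by auto
  qed
  have zyE: "{z, y} \<notin> E"
  proof
    assume "{z, y} \<in> E"
    then show False using L3[of a b c z y] F ab bc ac z y zy by auto
  qed
  have xyE: "{x, y} \<notin> E"
  proof
    assume "{x, y} \<in> E"
    then show False using L3[of b c a x y] F ab bc ac x y xy by (auto simp: insert_commute)
  qed
  have dis: "distinct [a, b, c, z, x, y]" using F(2) z x y zx zy xy by auto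
  have sub: "{a, b, c, z, x, y} \<subseteq> V" using edge_V ab bc z x y by auto
  have eq: "{e \<in> E. e \<subseteq> {a, b, c, z, x, y}} =
       {{a, b}, {a, c}, {b, c}, {a, z}, {b, z}, {b, x}, {c, x}, {c, y}, {a, y}}"
  proof (intro equalityI subsetI)
    fix e assume "e \<in> {e \<in> E. e \<subseteq> {a, b, c, z, x, y}}"
    then have eE: "e \<in> E" and es: "e \<subseteq> {a, b, c, z, x, y}" by auto
    obtain p q where pq: "e = {p, q}" "p \<noteq> q" using edge_pair[OF eE] by blast
    have pS: "p \<in> {a, b, c, z, x, y}" and qS: "q \<in> {a, b, c, z, x, y}" using es pq by auto
    have nE: "{p, q} \<in> E" using eE pq by simp
    have ne: "{c, z} \<notin> E" "{z, c} \<notin> E" "{a, x} \<notin> E" "{x, a} \<notin> E" "{b, y} \<notin> E" "{y, b} \<notin> E"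
      "{z, x} \<notin> E" "{x, z} \<notin> E" "{z, y} \<notin> E" "{y, z} \<notin> E" "{x, y} \<notin> E" "{y, x} \<notin> E"
      using cz ax by' zxE zyE xyE by (auto simp: insert_commute)
    show "e \<in> {{a, b}, {a, c}, {b, c}, {a, z}, {b, z}, {b, x}, {c, x}, {c, y}, {a, y}}"
      unfolding pq(1)
    proof -
      from pS have "p = a \<or> p = b \<or> p = c \<or> p = z \<or> p = x \<or> p = y" by simp
      moreover from qS have "q = a \<or> q = b \<or> q = c \<or> q = z \<or> q = x \<or> q = y" by simp
      ultimately show "{p, q} \<in> {{a, b}, {a, c}, {b, c}, {a, z}, {b, z}, {b, x}, {c, x}, {c, y}, {a, y}}"
        using pq(2) nE ne by (elim disjE) (simp_all add: insert_commute)
    qed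
  next
    fix e assume "e \<in> {{a, b}, {a, c}, {b, c}, {a, z}, {b, z}, {b, x}, {c, x}, {c, y}, {a, y}}"
    then show "e \<in> {e \<in> E. e \<subseteq> {a, b, c, z, x, y}}"
      using ab bc ac z x y by (auto simp: insert_commute)
  qed
  have "S3_copy V E a b c z x y"
    unfolding S3_copy_def using dis sub eq by (simp add: insert_commute)
  then show ?thesis unfolding central_sets_def using F(1) by blast
qed

lemma reduced_good: "T \<in> reduced_triangles V E \<longleftrightarrow> good E T"
proof
  assume r: "T \<in> reduced_triangles V E"
  then have c3: "card T = 3" and sub: "T \<subseteq> reduced_V V E"
    and pr: "\<forall>u\<in>T. \<forall>v\<in>T. u \<noteq> v \<longrightarrow> {u, v} \<in> reduced_E V E"
    unfolding reduced_triangles_def by auto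
  have X: "\<exists>X. good E X \<and> u \<in> X \<and> v \<in> X" if uv: "u \<in> T" "v \<in> T" "u \<noteq> v" for u v
  proof -
    have "{u, v} \<in> reduced_E V E" using pr uv by blast
    then obtain X where "X \<in> central_sets V E" "{u, v} \<subseteq> X" unfolding reduced_E_def by blast
    then show ?thesis using central_good by blast
  qed
  have edges: "{u, v} \<in> E" if "u \<in> T" "v \<in> T" "u \<noteq> v" for u v
    using X[OF that] that unfolding good_def tri_def by blast
  have t: "tri E T" unfolding tri_def using c3 edges by blast
  have "\<exists>z. z \<notin> T \<and> {u, z} \<in> E \<and> {v, z} \<in> E" if uvT: "u \<in> T" "v \<in> T" "u \<noteq> v" for u v
  proof -
    obtain X where gX: "good E X" and uv: "u \<in> X" "v \<in> X" using X[OF uvT] by blast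
    show ?thesis
    proof (cases "X = T")
      case True
      then show ?thesis using gX uv uvT unfolding good_def by blast
    next
      case False
      have cX: "card X = 3" using gX unfolding good_def tri_def by simp
      obtain w where w: "X = {u, v, w}" "w \<notin> {u, v}" using third[OF cX uv uvT(3)] by blast
      have "w \<notin> T"
      proof
        assume "w \<in> T"
        then have "X \<subseteq> T" using w uvT by auto
        moreover have "finite T" using c3 by (metis card.infinite zero_neq_numeral)
        ultimately have "X = T" using cX c3 by (simp add: card_subset_eq)
        then show False using False by simp
      qed
      moreover have "{u, w} \<in> E" "{v, w} \<in> E" using gX w uvT unfolding good_def tri_def by auto
      ultimately show ?thesis by blast
    qed
  qed
  then show "good E T" unfolding good_def using t by blast
next
  assume g: "good E T"
  then have c: "T \<in> central_sets V E" by (rule good_central)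
  have c3: "card T = 3" using g unfolding good_def tri_def by simp
  have "T \<subseteq> reduced_V V E" unfolding reduced_V_def using c by blast
  moreover have "{u, v} \<in> reduced_E V E" if "u \<in> T" "v \<in> T" "u \<noteq> v" for u v
    unfolding reduced_E_def using c that by auto
  ultimately show "T \<in> reduced_triangles V E" unfolding reduced_triangles_def using c3 by blast
qed

end

theorem lemma4p10:
  fixes V :: "'a set" and E :: "'a set set" and pos :: "'a \<Rightarrow> nat"
  assumes "maximal_outerplanar V E"
    and "outerplanar_emb V E pos"
  shows "\<exists>f g. bij_betw f (central_sets V E) (reduced_triangles V E) \<and>
               bij_betw g (reduced_triangles V E) (dual_deg3 V E pos)"
proof -
  have A: "central_sets V E = reduced_triangles V E"
    using central_good[OF assms(2)] good_central[OF assms(2)] reduced_good[OF assms(2)] by blast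
  have B: "reduced_triangles V E = dual_deg3 V E pos"
    using reduced_good[OF assms(2)] deg3_good[OF assms(2) assms(1)] by blast
  show ?thesis unfolding A B by (intro exI[of _ id]) (simp add: bij_betw_id)
qed

end
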